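(* For every $c>2$ and every instance $(A,C,k)$, there exists a committee satisfying EJR+ whose representation ratio is at least $\frac34$ and whose utilitarian ratio is at least $\min\left(\frac{2}{\sqrt{ck}}-\frac2k,\ \frac{(c-2)^2}{4c^2}-\frac1k\right)$.
   Context: An instance $(A,C,k)$ consists of a finite nonempty candidate set $C$, voters $N=\{1,\dots,n\}$, approval sets $A_i\subseteq C$, and a committee size $1\le k\le|C|$. A committee is $W\subseteq C$ with $|W|\le k$. $\mathrm{sw}(W)=\sum_i|A_i\cap W|$ and $\mathrm{cov}(W)=|\{i:A_i\cap W\ne\emptyset\}|$; the utilitarian ratio is $\mathrm{sw}(W)/\max\{\mathrm{sw}(W'):|W'|=k\}$ and the representation ratio is $\mathrm{cov}(W)/\max\{\mathrm{cov}(W'):|W'|=k\}$. $W$ satisfies EJR+ if for every $\ell\in\{1,\dots,k\}$ and every $N'\subseteq N$ with $|N'|\ge\ell n/k$ and $\bigcap_{i\in N'}A_i\ne\emptyset$, either some $i\in N'$ has $|A_i\cap W|\ge\ell$ or $\bigcap_{i\in N'}A_i\subseteq W$. *)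

theory Defs
  imports Complex_Main
begin

definition sw :: "nat \<Rightarrow> (nat \<Rightarrow> 'c set) \<Rightarrow> 'c set \<Rightarrow> nat" where
  "sw n A W = (\<Sum>i\<in>{1..n}. card (A i \<inter> W))"

definition cov :: "nat \<Rightarrow> (nat \<Rightarrow> 'c set) \<Rightarrow> 'c set \<Rightarrow> nat" where
  "cov n A W = card {i\<in>{1..n}. A i \<inter> W \<noteq> {}}"

definition max_sw :: "nat \<Rightarrow> (nat \<Rightarrow> 'c set) \<Rightarrow> 'c set \<Rightarrow> nat \<Rightarrow> nat" where
  "max_sw n A C k = Max {sw n A W' | W'. W' \<subseteq> C \<and> card W' = k}"

definition max_cov :: "nat \<Rightarrow> (nat \<Rightarrow> 'c set) \<Rightarrow> 'c set \<Rightarrow> nat \<Rightarrow> nat" where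
  "max_cov n A C k = Max {cov n A W' | W'. W' \<subseteq> C \<and> card W' = k}"

definition util_ratio :: "nat \<Rightarrow> (nat \<Rightarrow> 'c set) \<Rightarrow> 'c set \<Rightarrow> nat \<Rightarrow> 'c set \<Rightarrow> real" where
  "util_ratio n A C k W =
     (if max_sw n A C k = 0 then 1 else real (sw n A W) / real (max_sw n A C k))"

definition rep_ratio :: "nat \<Rightarrow> (nat \<Rightarrow> 'c set) \<Rightarrow> 'c set \<Rightarrow> nat \<Rightarrow> 'c set \<Rightarrow> real" where
  "rep_ratio n A C k W =
     (if max_cov n A C k = 0 then 1 else real (cov n A W) / real (max_cov n A C k))"

definition EJR_plus :: "nat \<Rightarrow> (nat \<Rightarrow> 'c set) \<Rightarrow> nat \<Rightarrow> 'c set \<Rightarrow> bool" where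
  "EJR_plus n A k W \<longleftrightarrow>
     (\<forall>l\<in>{1..k}. \<forall>N'. N' \<subseteq> {1..n} \<and> real (card N') \<ge> real l * real n / real k
        \<and> \<Inter>(A ` N') \<noteq> {} \<longrightarrow>
          (\<exists>i\<in>N'. card (A i \<inter> W) \<ge> l) \<or> \<Inter>(A ` N') \<subseteq> W)"

definition abc_instance :: "nat \<Rightarrow> (nat \<Rightarrow> 'c set) \<Rightarrow> 'c set \<Rightarrow> nat \<Rightarrow> bool" where
  "abc_instance n A C k \<longleftrightarrow> finite C \<and> C \<noteq> {} \<and> n \<ge> 1 \<and>
     (\<forall>i\<in>{1..n}. A i \<subseteq> C) \<and> 1 \<le> k \<and> k \<le> card C"

end

theory Submission
  imports Defs
begin

lemma caseII_poly:
  fixes p v :: real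
  assumes "0 \<le> p" "0 < v" "v \<le> 1 - p"
  shows "v * (1 - p - v)^2 \<le> v - 4*p*v + p"
proof -
  define q where "q = 1 - p - v"
  have q0: "0 \<le> q" using assms q_def by simp
  have qv: "q \<le> 1 - v" using assms q_def by simp
  have pq: "p = 1 - v - q" using q_def by simp
  define E where "E = (1-2*v)^2 + q*(4*v - 1) - v*q^2"
  have eq1: "v - 4*p*v + p - v*q^2 = E"
    unfolding pq E_def by (simp add: power2_eq_square algebra_simps)
  have id: "(1-v)*E = (1-v-q)*(1-2*v)^2 + q*(v^2*(2-v)) + ((1-v)*v*q)*(1-v-q)"
    unfolding E_def by (simp add: power2_eq_square algebra_simps)
  have E0: "E \<ge> 0"
  proof (cases "v < 1")
    case True
    have "(1-v)*E \<ge> 0" unfolding id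
      using q0 qv assms True by (intro add_nonneg_nonneg mult_nonneg_nonneg) auto
    then show ?thesis using True by (simp add: zero_le_mult_iff)
  next
    case False
    then have "q = 0" using q0 qv by simp
    then show ?thesis unfolding E_def by simp
  qed
  show ?thesis using eq1 E0 q_def by simp
qed

lemma caseII_ineq:
  fixes p v t :: real
  assumes "0 \<le> p" "0 < v" "p + v < 2*t" "v \<le> 1 - p" "t < 1/2"
  shows "(1/2 - t)^2 \<le> 1/4 - p + p/(4*v)"
proof -
  have a: "0 \<le> 1/2 - t" using assms by simp
  have b: "1/2 - t \<le> (1 - p - v)/2" using assms by simp
  have "(1/2 - t)^2 \<le> ((1 - p - v)/2)^2" by (rule power_mono[OF b a])
  also have "\<dots> \<le> 1/4 - p + p/(4*v)"
  proof -
    have "v * (1 - p - v)^2 \<le> v - 4*p*v + p" using caseII_poly assms by simp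
    then have "(1 - p - v)^2 \<le> (v - 4*p*v + p)/v" using assms(2) by (simp add: field_simps)
    also have "(v - 4*p*v + p)/v = 1 - 4*p + p/v" using assms(2) by (simp add: field_simps)
    finally have "(1 - p - v)^2 \<le> 1 - 4*p + p/v" .
    then show ?thesis by (simp add: power_divide field_simps)
  qed
  finally show ?thesis .
qed

lemma caseI_poly:
  fixes A b :: real
  assumes "0 < A" "4*A^2 < b" "b < 2*A"
  shows "(2*A - b) * (12/5*A - b) \<le> 2/5 * A"
proof -
  have h: "4*A^2 < 2*A" using assms by linarith
  have "A*(4*A - 2) < 0" using h by (simp add: power2_eq_square algebra_simps)
  then have "4*A - 2 < 0" using assms(1) by (simp add: mult_less_0_iff)
  then have A2: "A < 1/2" by simp
  have "(2*A - b) * (12/5*A - b) \<le> (2*A - 4*A^2) * (12/5*A - 4*A^2)"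
    using assms A2 by (intro mult_mono) (auto simp: power2_eq_square)
  also have "\<dots> \<le> 2/5*A"
  proof -
    have id: "2 - 24*A + 88*A^2 - 80*A^3 = (296/5)*(1-2*A)*(A-9/50)^2 + (192/5)*A*(A-9/50)^2 + (256/3125)*(1-2*A) + (212/3125)*A"
      by (simp add: power2_eq_square power3_eq_cube field_simps) algebra?
    have "0 \<le> (296/5)*(1-2*A)*(A-9/50)^2 + (192/5)*A*(A-9/50)^2 + (256/3125)*(1-2*A) + (212/3125)*A"
      using A2 assms(1) by (intro add_nonneg_nonneg mult_nonneg_nonneg) auto
    then have "0 \<le> 2 - 24*A + 88*A^2 - 80*A^3" using id by simp
    then have "24*A - 88*A^2 + 80*A^3 \<le> 2" by simp
    then have "A*(24*A - 88*A^2 + 80*A^3) \<le> A*2" using assms(1) by (intro mult_left_mono) auto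
    then show ?thesis by (simp add: power2_eq_square power3_eq_cube algebra_simps)
  qed
  finally show ?thesis .
qed

lemma caseI_final:
  fixes A b r :: real
  assumes "0 < A" "4*A^2 < b" "r \<ge> 12/5*A - b" "r \<ge> 0"
  shows "r/(1+r) \<ge> 2*A - b"
proof (cases "b < 2*A")
  case False
  have "r/(1+r) \<ge> 0" using assms by simp
  then show ?thesis using False by simp
next
  case True
  define r0 where "r0 = 12/5*A - b"
  have r0p: "r0 > 0" using True assms r0_def by simp
  have mono: "r0/(1+r0) \<le> r/(1+r)" using assms r0p r0_def by (simp add: field_simps)
  have "(2*A - b) * (1 + r0) = r0 - (2/5*A - (2*A - b) * (12/5*A - b))"
    unfolding r0_def by (simp add: algebra_simps)
  also have "\<dots> \<le> r0" using caseI_poly[OF assms(1,2) True] by simp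
  finally have "(2*A - b) * (1 + r0) \<le> r0" .
  then have "2*A - b \<le> r0/(1+r0)" using r0p by (simp add: field_simps)
  then show ?thesis using mono by simp
qed


lemma caseII_bound:
  fixes K N g u r1 c :: real
  assumes K1: "K \<ge> 1" and N0: "N > 0" and c2: "c > 2" and g0: "0 \<le> g" and u0: "0 \<le> u"
    and cs: "c * (g*N + K*u) < 2*K*N"
    and uv: "K*u \<le> K*N - g*N"
    and r1: "r1 = 0 \<or> (u > 0 \<and> g*N + 4*(r1-1)*u < 3*K*u)"
  shows "(K - g - r1)/K \<ge> (c-2)^2/(4*c^2) - 1/K"
proof -
  define t where "t = 1/c"
  define p where "p = g/K"
  define v where "v = u/N"
  have K0: "K > 0" using K1 by simp
  have c0: "c > 0" using c2 by simp
  have "1/c < 1/2" using c2 by (intro divide_strict_left_mono) auto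
  then have t2: "t < 1/2" "t > 0" using c0 t_def by auto
  have ct: "(c-2)^2/(4*c^2) = (1/2 - t)^2" unfolding t_def using c0
    by (simp add: field_simps power2_eq_square)
  have pv: "p + v < 2*t"
  proof -
    have "(g*N + K*u) / (K*N) < 2/c" using cs K0 N0 c0 by (simp add: field_simps)
    moreover have "(g*N + K*u) / (K*N) = p + v" unfolding p_def v_def using K0 N0 by (simp add: field_simps)
    ultimately show ?thesis unfolding t_def by simp
  qed
  have p0: "p \<ge> 0" unfolding p_def using g0 K0 by simp
  have v0: "v \<ge> 0" unfolding v_def using u0 N0 by simp
  have vp: "v \<le> 1 - p"
  proof -
    have "u/N \<le> (K*N - g*N)/(K*N)" using uv K0 N0 by (simp add: field_simps)
    also have "\<dots> = 1 - g/K" using K0 N0 by (simp add: field_simps)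
    finally show ?thesis unfolding v_def p_def .
  qed
  from r1 show ?thesis
  proof
    assume "r1 = 0"
    then have "(K - g - r1)/K = 1 - p" unfolding p_def using K0 by (simp add: field_simps)
    moreover have "(1/2 - t)^2 \<le> 1 - 2*t"
    proof -
      have "(1/2 - t)^2 \<le> (1/2 - t) * 1" unfolding power2_eq_square using t2 by (intro mult_left_mono) auto
      then have "(1/2 - t)^2 \<le> 1/2 - t" by simp
      then show ?thesis using t2 by linarith
    qed
    moreover have "1/K \<ge> 0" using K0 by simp
    ultimately show ?thesis using ct pv v0 by linarith
  next
    assume h: "u > 0 \<and> g*N + 4*(r1-1)*u < 3*K*u"
    then have u1: "u > 0" and m: "g*N + 4*(r1-1)*u < 3*K*u" by auto
    have v1: "v > 0" unfolding v_def using u1 N0 by simp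
    have "4*r1*u < 3*K*u - g*N + 4*u" using m by (simp add: algebra_simps)
    then have "r1 < (3*K*u - g*N + 4*u)/(4*u)" using u1 by (simp add: field_simps)
    then have "r1/K < ((3*K*u - g*N + 4*u)/(4*u))/K" using K0 by (rule divide_strict_right_mono)
    also have "((3*K*u - g*N + 4*u)/(4*u))/K = (3*K*u - g*N + 4*u)/(4*u*K)" by simp
    finally have "r1/K < (3*K*u - g*N + 4*u)/(4*u*K)" .
    also have "(3*K*u - g*N + 4*u)/(4*u*K) = 3/4 - p/(4*v) + 1/K"
      unfolding p_def v_def using u1 K0 N0 by (simp add: field_simps)
    finally have r1b: "r1/K < 3/4 - p/(4*v) + 1/K" .
    have "(K - g - r1)/K = 1 - p - r1/K" unfolding p_def using K0 by (simp add: field_simps)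
    also have "\<dots> > 1/4 - p + p/(4*v) - 1/K" using r1b by simp
    finally have a: "(K - g - r1)/K > 1/4 - p + p/(4*v) - 1/K" .
    have "(1/2 - t)^2 \<le> 1/4 - p + p/(4*v)"
      by (rule caseII_ineq[OF p0 v1 pv vp t2(1)])
    then show ?thesis using a ct by linarith
  qed
qed

lemma ratio_lb:
  fixes sw opt lb z :: real
  assumes "0 \<le> lb" "lb \<le> sw" "0 < opt" "opt \<le> sw + z" "0 < z"
  shows "lb/(lb + z) \<le> sw/opt"
proof -
  have "lb * opt \<le> lb * (sw + z)" using assms by (intro mult_left_mono) auto
  also have "\<dots> = lb*sw + lb*z" by (simp add: algebra_simps)
  also have "\<dots> \<le> lb*sw + sw*z" using assms by (intro add_left_mono mult_right_mono) auto
  also have "\<dots> = sw * (lb + z)" by (simp add: algebra_simps)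
  finally have "lb * opt \<le> sw * (lb + z)" .
  then show ?thesis using assms by (simp add: field_simps)
qed

lemma caseI_bound:
  fixes K N S Lb Q cn c :: real
  assumes K1: "K \<ge> 1" and N0: "N > 0" and S0: "S > 0" and c2: "c > 2" and cn0: "cn \<ge> 0"
    and cnb: "(cn + 1) * N > K * S"
    and Lb: "K * Lb \<ge> Q + cn * max 0 (K*S - N)"
    and Q: "Q \<ge> 3*K*N/(2*c)"
  shows "Lb/(Lb + K*S) \<ge> 2/sqrt(c*K) - 2/K"
proof -
  have K0: "K > 0" using K1 by simp
  have c0: "c > 0" using c2 by simp
  define \<sigma> where "\<sigma> = S/N"
  have s0: "\<sigma> > 0" unfolding \<sigma>_def using S0 N0 by simp
  define \<rho> where "\<rho> = Lb/(K*S)"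
  have Lb0: "Lb \<ge> 0"
  proof -
    have "Q \<ge> 0" using Q K0 N0 c0 by (smt (verit) divide_nonneg_pos mult_pos_pos)
    moreover have "cn * max 0 (K*S - N) \<ge> 0" using cn0 by simp
    ultimately have "K * Lb \<ge> 0" using Lb by linarith
    then show ?thesis using K0 by (simp add: zero_le_mult_iff)
  qed
  have rho0: "\<rho> \<ge> 0" unfolding \<rho>_def using Lb0 K0 S0 by simp
  have key: "\<rho> \<ge> \<sigma> + 3/(2*c*K*\<sigma>) - 2/K"
  proof (cases "K*S \<ge> N")
    case True
    have "cn > K*S/N - 1" using cnb N0 by (simp add: field_simps)
    then have "cn * (K*S - N) \<ge> (K*S/N - 1) * (K*S - N)" using True by (intro mult_right_mono) auto
    then have "K * Lb \<ge> 3*K*N/(2*c) + (K*S/N - 1) * (K*S - N)" using Lb Q True by simp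
    then have "K * Lb / (K*K*S) \<ge> (3*K*N/(2*c) + (K*S/N - 1) * (K*S - N)) / (K*K*S)"
      using K0 S0 by (intro divide_right_mono) auto
    moreover have "K * Lb / (K*K*S) = \<rho>" unfolding \<rho>_def using K0 S0 by (simp add: field_simps)
    moreover have "(3*K*N/(2*c) + (K*S/N - 1) * (K*S - N)) / (K*K*S)
        = 3/(2*c*K*\<sigma>) + \<sigma> - 2/K + 1/(K*K*\<sigma>)"
      unfolding \<sigma>_def using K0 S0 N0 c0 by (simp add: field_simps power2_eq_square) (simp add: algebra_simps)?
    moreover have "1/(K*K*\<sigma>) \<ge> 0" using K0 s0 by simp
    ultimately show ?thesis by linarith
  next
    case False
    have "K * Lb \<ge> 3*K*N/(2*c)" using Lb Q False cn0 by simp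
    then have "K * Lb / (K*K*S) \<ge> 3*K*N/(2*c) / (K*K*S)"
      using K0 S0 by (intro divide_right_mono) auto
    moreover have "K * Lb / (K*K*S) = \<rho>" unfolding \<rho>_def using K0 S0 by (simp add: field_simps)
    moreover have "3*K*N/(2*c) / (K*K*S) = 3/(2*c*K*\<sigma>)"
      unfolding \<sigma>_def using K0 S0 N0 c0 by (simp add: field_simps)
    moreover have "\<sigma> < 1/K" unfolding \<sigma>_def using False K0 N0 by (simp add: field_simps)
    moreover have "1/K \<ge> 0" using K0 by simp
    ultimately show ?thesis by linarith
  qed
  define A where "A = 1/sqrt(c*K)"
  have cK: "c*K > 0" using c0 K0 by simp
  have A0: "A > 0" unfolding A_def using cK by simp
  have A2: "A^2 = 1/(c*K)" unfolding A_def using cK by (simp add: power_divide)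
  have X0: "1/(c*K*\<sigma>) > 0" using cK s0 by simp
  have e1: "3/(2*c*K*\<sigma>) = (3/2) * (1/(c*K*\<sigma>))" by simp
  have e2: "36/25 * A^2/\<sigma> = (36/25) * (1/(c*K*\<sigma>))" unfolding A2 by simp
  have "(36/25) * (1/(c*K*\<sigma>)) \<le> (3/2) * (1/(c*K*\<sigma>))" using X0 by (intro mult_right_mono) auto
  then have "3/(2*c*K*\<sigma>) \<ge> 36/25 * A^2/\<sigma>" using e1 e2 by simp
  moreover have "\<sigma> + 36/25 * A^2/\<sigma> \<ge> 12/5*A"
  proof -
    have "0 \<le> (\<sigma> - 6/5*A)^2" by simp
    then have "12/5*A*\<sigma> \<le> \<sigma>*\<sigma> + 36/25*A^2" by (simp add: power2_eq_square algebra_simps)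
    then show ?thesis using s0 by (simp add: field_simps power2_eq_square)
  qed
  ultimately have r1: "\<rho> \<ge> 12/5*A - 2/K" using key by linarith
  have b: "4*A^2 < 2/K" unfolding A2 using c2 K0 by (simp add: field_simps)
  have "\<rho>/(1+\<rho>) \<ge> 2*A - 2/K" by (rule caseI_final[OF A0 b r1 rho0])
  moreover have "\<rho>/(1+\<rho>) = Lb/(Lb + K*S)" unfolding \<rho>_def using K0 S0 Lb0 by (simp add: field_simps)
  moreover have "2*A = 2/sqrt(c*K)" unfolding A_def by simp
  ultimately show ?thesis by simp
qed


lemma r_exists_real:
  fixes K N g u V :: real
  assumes K0: "K > 0" and N0: "N \<ge> 0" and g0: "0 \<le> g" and u0: "0 \<le> u" and V0: "0 \<le> V"
    and gV: "g*N \<le> K*V" and uV: "u + V \<le> N"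
  shows "3*K*u \<le> g*N + 4*(K-g)*u"
proof (cases "K \<ge> 4*g")
  case True
  then have "3*K*u \<le> 4*(K-g)*u" using u0 by (intro mult_right_mono) auto
  moreover have "g*N \<ge> 0" using g0 N0 by simp
  ultimately show ?thesis by linarith
next
  case False
  have neg: "K - 4*g < 0" using False by simp
  have e1: "K*(g*N + 4*(K-g)*u - 3*K*u) = K*g*N + (K - 4*g)*(K*u)" by (simp add: algebra_simps)
  have e2: "(K - 4*g)*(K*u) \<ge> (K - 4*g)*(K*N - K*V)"
  proof -
    have "K*(u + V) \<le> K*N" using uV K0 by (intro mult_left_mono) auto
    then have "K*u \<le> K*N - K*V" by (simp add: algebra_simps)
    then show ?thesis using neg by (intro mult_left_mono_neg) auto
  qed
  have e3: "(K - 4*g)*(K*N - K*V) \<ge> (K - 4*g)*(K*N - g*N)"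
  proof -
    have "K*N - K*V \<le> K*N - g*N" using gV by simp
    then show ?thesis using neg by (intro mult_left_mono_neg) auto
  qed
  have e4: "K*g*N + (K - 4*g)*(K*N - g*N) = N*(K - 2*g)^2" by (simp add: algebra_simps power2_eq_square)
  have e5: "N*(K - 2*g)^2 \<ge> 0" using N0 by simp
  have "K*(g*N + 4*(K-g)*u - 3*K*u) \<ge> 0" using e1 e2 e3 e4 e5 by linarith
  then have "g*N + 4*(K-g)*u - 3*K*u \<ge> 0" using K0 by (simp add: zero_le_mult_iff)
  then show ?thesis by simp
qed

lemma good_subset_exact:
  fixes w :: "'a \<Rightarrow> real"
  assumes "finite X" "\<forall>x\<in>X. w x \<ge> 0" "r \<le> card X"
  shows "\<exists>Y\<subseteq>X. card Y = r \<and> real r * sum w X \<le> real (card X) * sum w Y"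
  using assms
proof (induction "card X - r" arbitrary: X)
  case 0
  then have "card X = r" by simp
  then show ?case by (intro exI[of _ X]) auto
next
  case (Suc d)
  show ?case
  proof (cases "r = 0")
    case True
    then show ?thesis by (intro exI[of _ "{}"]) auto
  next
    case False
    have ne: "X \<noteq> {}" using Suc by auto
    have fin: "finite (w ` X)" using Suc.prems(1) by simp
    have "Min (w ` X) \<in> w ` X" using fin ne by (intro Min_in) auto
    then obtain x where x: "x \<in> X" "w x = Min (w ` X)" by auto
    have xmin: "\<forall>y\<in>X. w x \<le> w y" using x fin by auto
    define X' where "X' = X - {x}"
    have cX: "card X' = card X - 1" "finite X'" using x Suc.prems(1) X'_def by auto
    have m: "card X > r" using Suc by linarith
    have "d = card X' - r" using Suc.hyps(2) cX by simp
    moreover have "\<forall>x\<in>X'. w x \<ge> 0" using Suc.prems(2) X'_def by auto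
    moreover have "r \<le> card X'" using cX m by simp
    ultimately have "\<exists>Y\<subseteq>X'. card Y = r \<and> real r * sum w X' \<le> real (card X') * sum w Y"
      using Suc.hyps(1)[of X'] cX(2) by blast
    then obtain Y where Y: "Y \<subseteq> X'" "card Y = r" "real r * sum w X' \<le> real (card X') * sum w Y"
      by blast
    have sumX: "sum w X = sum w X' + w x" using x Suc.prems(1) X'_def by (simp add: sum.remove)
    have "real (card X) * w x = (\<Sum>y\<in>X. w x)" by simp
    also have "\<dots> \<le> sum w X" using xmin by (intro sum_mono) auto
    finally have avg: "real (card X) * w x \<le> sum w X" .
    have Ynn: "sum w Y \<ge> 0" using Y Suc.prems(2) X'_def by (intro sum_nonneg) auto
    define m where "m = real (card X)"
    have m1: "m \<ge> 1" using m m_def by simp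
    have cX'r: "real (card X') = m - 1" using cX m m_def by (simp add: of_nat_diff)
    have "real r * sum w X * (m - 1) = real r * (m * sum w X' + m * w x - sum w X)"
      using sumX by (simp add: algebra_simps)
    also have "\<dots> \<le> real r * (m * sum w X')"
      using avg m_def by (intro mult_left_mono) auto
    also have "\<dots> = m * (real r * sum w X')" by simp
    also have "\<dots> \<le> m * ((m - 1) * sum w Y)" using Y(3) cX'r m1 by (intro mult_left_mono) auto
    finally have "(m - 1) * (real r * sum w X) \<le> (m - 1) * (m * sum w Y)" by (simp add: algebra_simps)
    moreover have "m - 1 > 0" using m m_def False by simp
    ultimately have "real r * sum w X \<le> m * sum w Y" by simp
    then show ?thesis using Y X'_def m_def by (intro exI[of _ Y]) auto
  qed
qed

lemma good_subset:
  fixes w :: "'a \<Rightarrow> real"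
  assumes "finite X" "\<forall>x\<in>X. w x \<ge> 0" "card X \<le> k" "r \<le> k"
  shows "\<exists>Y\<subseteq>X. card Y \<le> r \<and> real r * sum w X \<le> real k * sum w Y"
proof (cases "r \<le> card X")
  case True
  then obtain Y where Y: "Y\<subseteq>X" "card Y = r" "real r * sum w X \<le> real (card X) * sum w Y"
    using good_subset_exact assms by blast
  have "sum w Y \<ge> 0" using Y assms by (intro sum_nonneg) auto
  then have "real (card X) * sum w Y \<le> real k * sum w Y" using assms by (intro mult_right_mono) auto
  then show ?thesis using Y by (intro exI[of _ Y]) auto
next
  case False
  have "sum w X \<ge> 0" using assms by (intro sum_nonneg) auto
  then have "real r * sum w X \<le> real k * sum w X" using assms by (intro mult_right_mono) auto
  then show ?thesis using False by (intro exI[of _ X]) auto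
qed

definition score :: "nat \<Rightarrow> (nat \<Rightarrow> 'c set) \<Rightarrow> 'c \<Rightarrow> nat" where
  "score n A c = card {i\<in>{1..n}. c \<in> A i}"

definition grp :: "nat \<Rightarrow> (nat \<Rightarrow> 'c set) \<Rightarrow> 'c set \<Rightarrow> nat \<Rightarrow> 'c \<Rightarrow> nat set" where
  "grp n A W l c = {i\<in>{1..n}. c \<in> A i \<and> card (A i \<inter> W) < l}"

definition elig :: "nat \<Rightarrow> (nat \<Rightarrow> 'c set) \<Rightarrow> 'c set \<Rightarrow> nat \<Rightarrow> 'c set \<Rightarrow> nat \<Rightarrow> 'c \<Rightarrow> bool" where
  "elig n A C k W l c \<longleftrightarrow> c \<in> C \<and> c \<notin> W \<and> l * n \<le> card (grp n A W l c) * k"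

definition ejr_level :: "nat \<Rightarrow> (nat \<Rightarrow> 'c set) \<Rightarrow> nat \<Rightarrow> 'c set \<Rightarrow> nat \<Rightarrow> bool" where
  "ejr_level n A k W l \<longleftrightarrow> (\<forall>N'. N' \<subseteq> {1..n} \<and> real (card N') \<ge> real l * real n / real k
        \<and> \<Inter>(A ` N') \<noteq> {} \<longrightarrow>
          (\<exists>i\<in>N'. card (A i \<inter> W) \<ge> l) \<or> \<Inter>(A ` N') \<subseteq> W)"

definition cnt :: "nat \<Rightarrow> (nat \<Rightarrow> 'c set) \<Rightarrow> 'c set \<Rightarrow> 'c \<Rightarrow> nat" where
  "cnt n A W x = card {g\<in>W. score n A x \<le> score n A g}"

lemma EJR_plus_levels: "EJR_plus n A k W \<longleftrightarrow> (\<forall>l\<in>{1..k}. ejr_level n A k W l)"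
  unfolding EJR_plus_def ejr_level_def by blast

lemma ejr_level_mono: "ejr_level n A k W l \<Longrightarrow> W \<subseteq> W' \<Longrightarrow> finite W' \<Longrightarrow> ejr_level n A k W' l"
  unfolding ejr_level_def
proof (intro allI impI)
  fix N' assume h: "\<forall>N'. N' \<subseteq> {1..n} \<and> real l * real n / real k \<le> real (card N') \<and> \<Inter> (A ` N') \<noteq> {} \<longrightarrow>
            (\<exists>i\<in>N'. l \<le> card (A i \<inter> W)) \<or> \<Inter> (A ` N') \<subseteq> W"
    and W: "W \<subseteq> W'" "finite W'"
    and N: "N' \<subseteq> {1..n} \<and> real l * real n / real k \<le> real (card N') \<and> \<Inter> (A ` N') \<noteq> {}"
  from h N have "(\<exists>i\<in>N'. l \<le> card (A i \<inter> W)) \<or> \<Inter> (A ` N') \<subseteq> W" by blast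
  then show "(\<exists>i\<in>N'. l \<le> card (A i \<inter> W')) \<or> \<Inter> (A ` N') \<subseteq> W'"
  proof
    assume "\<exists>i\<in>N'. l \<le> card (A i \<inter> W)"
    then obtain i where "i \<in> N'" "l \<le> card (A i \<inter> W)" by blast
    moreover have "card (A i \<inter> W) \<le> card (A i \<inter> W')" using W by (intro card_mono) auto
    ultimately have "l \<le> card (A i \<inter> W')" by linarith
    then show ?thesis using \<open>i \<in> N'\<close> by blast
  qed (use W in auto)
qed

lemma EJR_plus_mono: "EJR_plus n A k W \<Longrightarrow> W \<subseteq> W' \<Longrightarrow> finite W' \<Longrightarrow> EJR_plus n A k W'"
  using ejr_level_mono EJR_plus_levels by metis

lemma score_le: "score n A c \<le> n"
proof -
  have "score n A c \<le> card {1..n}" unfolding score_def by (intro card_mono) auto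
  then show ?thesis by simp
qed

lemma noelig_ejr:
  assumes inst: "abc_instance n A C k" and l: "1 \<le> l"
    and ne: "\<forall>c. \<not> elig n A C k W l c"
  shows "ejr_level n A k W l"
  unfolding ejr_level_def
proof (intro allI impI)
  fix N' assume N: "N' \<subseteq> {1..n} \<and> real l * real n / real k \<le> real (card N') \<and> \<Inter> (A ` N') \<noteq> {}"
  show "(\<exists>i\<in>N'. l \<le> card (A i \<inter> W)) \<or> \<Inter> (A ` N') \<subseteq> W"
  proof (rule ccontr)
    assume "\<not> ?thesis"
    then have small: "\<forall>i\<in>N'. card (A i \<inter> W) < l" and "\<not> \<Inter> (A ` N') \<subseteq> W" by auto
    then obtain c where c: "c \<in> \<Inter> (A ` N')" "c \<notin> W" by auto
    have kpos: "real k > 0" "real n > 0" using inst unfolding abc_instance_def by auto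
    have "real l * real n / real k > 0" using kpos l by simp
    then have "card N' > 0" using N by linarith
    then obtain i0 where i0: "i0 \<in> N'" by (metis card_gt_0_iff ex_in_conv)
    have "c \<in> A i0" using c i0 by auto
    moreover have "A i0 \<subseteq> C" using inst N i0 unfolding abc_instance_def by auto
    ultimately have cC: "c \<in> C" by auto
    have sub: "N' \<subseteq> grp n A W l c" unfolding grp_def using N small c by auto
    have "card N' \<le> card (grp n A W l c)" using sub by (intro card_mono) (auto simp: grp_def)
    then have "real l * real n / real k \<le> real (card (grp n A W l c))" using N by linarith
    then have "real l * real n \<le> real (card (grp n A W l c)) * real k" using kpos by (simp add: field_simps)
    then have "l * n \<le> card (grp n A W l c) * k" by (simp only: of_nat_mult[symmetric] of_nat_le_iff)
    then have "elig n A C k W l c" unfolding elig_def using cC c by auto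
    then show False using ne by auto
  qed
qed

lemma noelig_witness:
  assumes "\<not> elig n A C k W l x" "x \<in> C" "x \<notin> W" "l * n \<le> score n A x * k"
  shows "\<exists>i\<in>{1..n}. x \<in> A i \<and> l \<le> card (A i \<inter> W)"
proof (rule ccontr)
  assume "\<not> ?thesis"
  then have "{i\<in>{1..n}. x \<in> A i} \<subseteq> grp n A W l x" unfolding grp_def by auto
  then have "score n A x \<le> card (grp n A W l x)" unfolding score_def by (intro card_mono) (auto simp: grp_def)
  then have "score n A x * k \<le> card (grp n A W l x) * k" by simp
  then have "l * n \<le> card (grp n A W l x) * k" using assms by linarith
  then show False using assms unfolding elig_def by auto
qed


definition Inv :: "nat \<Rightarrow> (nat \<Rightarrow> 'c set) \<Rightarrow> 'c set \<Rightarrow> nat \<Rightarrow> 'c set \<Rightarrow> nat \<Rightarrow> bool" where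
"Inv n A C k W l \<longleftrightarrow> W \<subseteq> C \<and> 1 \<le> l \<and> l \<le> k \<and>
  (\<exists>load::nat\<Rightarrow>real. (\<forall>i\<in>{1..n}. 0 \<le> load i \<and> real n * real l * load i \<le> real k * real (card (A i \<inter> W))
        \<and> real n * load i \<le> real k) \<and> sum load {1..n} = real (card W)) \<and>
  (\<forall>l'. l < l' \<and> l' \<le> k \<longrightarrow> ejr_level n A k W l') \<and>
  (\<forall>g\<in>W. l * n \<le> score n A g * k) \<and>
  (\<forall>x\<in>C-W. \<forall>l'. l < l' \<longrightarrow> l' * n \<le> score n A x * k \<longrightarrow> l' \<le> cnt n A W x) \<and>
  (\<forall>x\<in>C-W. l * n \<le> score n A x * k \<longrightarrow>
      (elig n A C k W l x \<and> (\<forall>g\<in>W. score n A x \<le> score n A g)) \<or> l \<le> cnt n A W x)"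

lemma InvD:
  assumes "Inv n A C k W l"
  shows "W \<subseteq> C" "1 \<le> l" "l \<le> k"
    "\<exists>load::nat\<Rightarrow>real. (\<forall>i\<in>{1..n}. 0 \<le> load i \<and> real n * real l * load i \<le> real k * real (card (A i \<inter> W))
        \<and> real n * load i \<le> real k) \<and> sum load {1..n} = real (card W)"
    "\<And>l'. l < l' \<Longrightarrow> l' \<le> k \<Longrightarrow> ejr_level n A k W l'"
    "\<And>g. g\<in>W \<Longrightarrow> l * n \<le> score n A g * k"
    "\<And>x l'. x\<in>C-W \<Longrightarrow> l < l' \<Longrightarrow> l' * n \<le> score n A x * k \<Longrightarrow> l' \<le> cnt n A W x"
    "\<And>x. x\<in>C-W \<Longrightarrow> l * n \<le> score n A x * k \<Longrightarrow>
      (elig n A C k W l x \<and> (\<forall>g\<in>W. score n A x \<le> score n A g)) \<or> l \<le> cnt n A W x"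
  using assms unfolding Inv_def by blast+

lemma InvI:
  assumes "W \<subseteq> C" "1 \<le> l" "l \<le> k"
    "\<exists>load::nat\<Rightarrow>real. (\<forall>i\<in>{1..n}. 0 \<le> load i \<and> real n * real l * load i \<le> real k * real (card (A i \<inter> W))
        \<and> real n * load i \<le> real k) \<and> sum load {1..n} = real (card W)"
    "\<And>l'. l < l' \<Longrightarrow> l' \<le> k \<Longrightarrow> ejr_level n A k W l'"
    "\<And>g. g\<in>W \<Longrightarrow> l * n \<le> score n A g * k"
    "\<And>x l'. x\<in>C-W \<Longrightarrow> l < l' \<Longrightarrow> l' * n \<le> score n A x * k \<Longrightarrow> l' \<le> cnt n A W x"
    "\<And>x. x\<in>C-W \<Longrightarrow> l * n \<le> score n A x * k \<Longrightarrow>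
      (elig n A C k W l x \<and> (\<forall>g\<in>W. score n A x \<le> score n A g)) \<or> l \<le> cnt n A W x"
  shows "Inv n A C k W l"
  using assms unfolding Inv_def by blast

lemma cnt_mono:
  assumes "W \<subseteq> W'" "finite W'"
  shows "cnt n A W x \<le> cnt n A W' x"
  unfolding cnt_def using assms by (intro card_mono) auto

lemma cnt_all:
  assumes "\<forall>g\<in>W. score n A x \<le> score n A g"
  shows "cnt n A W x = card W"
proof -
  have "{g\<in>W. score n A x \<le> score n A g} = W" using assms by auto
  then show ?thesis unfolding cnt_def by simp
qed

lemma witness_card:
  assumes "finite W" "l \<le> card (A i \<inter> W)"
  shows "l \<le> card W"
proof -
  have "card (A i \<inter> W) \<le> card W" using assms by (intro card_mono) auto
  then show ?thesis using assms by linarith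
qed

lemma Inv_pick:
  assumes inst: "abc_instance n A C k" and I: "Inv n A C k W l"
    and el: "elig n A C k W l c" and mx: "\<forall>c'. elig n A C k W l c' \<longrightarrow> score n A c' \<le> score n A c"
  shows "Inv n A C k (insert c W) l"
proof -
  have finC: "finite C" and n1: "n \<ge> 1" and k1: "k \<ge> 1" and AC: "\<forall>i\<in>{1..n}. A i \<subseteq> C"
    using inst unfolding abc_instance_def by auto
  have WC: "W \<subseteq> C" and l1: "1 \<le> l" "l \<le> k" using InvD[OF I] by auto
  have cC: "c \<in> C" and cW: "c \<notin> W" and gsz: "l * n \<le> card (grp n A W l c) * k"
    using el unfolding elig_def by auto
  define W' where "W' = insert c W"
  have W'C: "W' \<subseteq> C" using WC cC W'_def by auto
  have finW: "finite W" "finite W'" using WC W'C finC by (auto intro: finite_subset)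
  define Gp where "Gp = grp n A W l c"
  have GpS: "Gp \<subseteq> {1..n}" unfolding Gp_def grp_def by auto
  have finGp: "finite Gp" using GpS by (auto intro: finite_subset)
  have "1 * 1 \<le> l * n" using l1 n1 by (intro mult_le_mono) auto
  then have "1 \<le> card Gp * k" using gsz unfolding Gp_def by linarith
  then have cGp: "card Gp \<ge> 1" by (cases "card Gp") auto
  have gszr: "real l * real n \<le> real (card Gp) * real k"
    using gsz Gp_def by (simp only: of_nat_mult[symmetric] of_nat_le_iff)
  from InvD(4)[OF I] obtain load where load: "\<forall>i\<in>{1..n}. 0 \<le> load i \<and> real n * real l * load i \<le> real k * real (card (A i \<inter> W))
        \<and> real n * load i \<le> real k" "sum load {1..n} = real (card W)"
    by blast
  define load' where "load' = (\<lambda>i. load i + (if i \<in> Gp then 1 / real (card Gp) else 0))"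
  have cardW': "card W' = card W + 1" using cW finW W'_def by simp
  have Ai_mono: "card (A i \<inter> W) \<le> card (A i \<inter> W')" for i
    using finW W'_def by (intro card_mono) auto
  have load'_ok: "\<forall>i\<in>{1..n}. 0 \<le> load' i \<and> real n * real l * load' i \<le> real k * real (card (A i \<inter> W'))
        \<and> real n * load' i \<le> real k"
  proof
    fix i assume i: "i \<in> {1..n}"
    have li: "0 \<le> load i" "real n * real l * load i \<le> real k * real (card (A i \<inter> W))"
      "real n * load i \<le> real k" using load(1) i by auto
    show "0 \<le> load' i \<and> real n * real l * load' i \<le> real k * real (card (A i \<inter> W'))
        \<and> real n * load' i \<le> real k"
    proof (cases "i \<in> Gp")
      case False
      then have "load' i = load i" unfolding load'_def by simp
      moreover have "real k * real (card (A i \<inter> W)) \<le> real k * real (card (A i \<inter> W'))"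
        using Ai_mono by (intro mult_left_mono) auto
      ultimately show ?thesis using li by (simp only:) (meson order_trans)
    next
      case True
      then have ci: "c \<in> A i" and lt: "card (A i \<inter> W) < l" unfolding Gp_def grp_def by auto
      have "A i \<inter> W' = insert c (A i \<inter> W)" using ci W'_def by auto
      then have a': "card (A i \<inter> W') = card (A i \<inter> W) + 1" using cW finW by simp
      define a where "a = real (card (A i \<inter> W))"
      have al: "a + 1 \<le> real l" using lt a_def by linarith
      define g where "g = real (card Gp)"
      have gpos: "g > 0" using cGp g_def by simp
      have lpos: "real l > 0" using l1 by simp
      have npos: "real n > 0" using n1 by simp
      have ld: "load' i = load i + 1/g" using True load'_def g_def by simp
      have key: "real n * real l * (1/g) \<le> real k" using gszr gpos g_def by (simp add: field_simps)
      have A1: "real n * real l * load' i \<le> real k * (a + 1)"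
        using li(2) key a_def ld by (simp add: algebra_simps)
      have A2: "real n * load' i \<le> real k"
      proof -
        have "real l * (real n * load' i) = real n * real l * load' i" by simp
        also have "\<dots> \<le> real k * (a + 1)" using A1 .
        also have "\<dots> \<le> real k * real l" using al by (intro mult_left_mono) auto
        finally have "real l * (real n * load' i) \<le> real l * real k" by (simp add: mult.commute)
        then show ?thesis using lpos by simp
      qed
      have "0 \<le> load' i" using li ld gpos by simp
      then show ?thesis using A1 A2 a' a_def by (simp add: add.commute)
    qed
  qed
  have sum': "sum load' {1..n} = real (card W')"
  proof -
    have "sum load' {1..n} = sum load {1..n} + (\<Sum>i\<in>{1..n}. if i \<in> Gp then 1 / real (card Gp) else 0)"
      unfolding load'_def by (simp add: sum.distrib)
    also have "(\<Sum>i\<in>{1..n}. if i \<in> Gp then 1 / real (card Gp) else 0) = (\<Sum>i\<in>Gp. 1 / real (card Gp))"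
      using GpS by (simp add: sum.If_cases Int_absorb1)
    also have "\<dots> = 1" using cGp by simp
    finally show ?thesis using load(2) cardW' by simp
  qed
  have ejr': "\<And>l'. l < l' \<Longrightarrow> l' \<le> k \<Longrightarrow> ejr_level n A k W' l'"
    using InvD(5)[OF I] ejr_level_mono finW W'_def by blast
  have sc: "\<And>g. g\<in>W' \<Longrightarrow> l * n \<le> score n A g * k"
  proof -
    have "card Gp \<le> score n A c" unfolding Gp_def grp_def score_def by (intro card_mono) auto
    then have "l * n \<le> score n A c * k" using gsz Gp_def by (meson le_trans mult_le_mono1)
    then show "\<And>g. g\<in>W' \<Longrightarrow> l * n \<le> score n A g * k" using InvD(6)[OF I] W'_def by auto
  qed
  have f': "\<And>x l'. x\<in>C-W' \<Longrightarrow> l < l' \<Longrightarrow> l' * n \<le> score n A x * k \<Longrightarrow> l' \<le> cnt n A W' x"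
  proof -
    fix x l' assume "x \<in> C - W'" "l < l'" "l' * n \<le> score n A x * k"
    then have "l' \<le> cnt n A W x" using InvD(7)[OF I] W'_def by auto
    also have "\<dots> \<le> cnt n A W' x" by (rule cnt_mono) (use finW W'_def in auto)
    finally show "l' \<le> cnt n A W' x" .
  qed
  have g': "\<And>x. x\<in>C-W' \<Longrightarrow> l * n \<le> score n A x * k \<Longrightarrow>
      (elig n A C k W' l x \<and> (\<forall>g\<in>W'. score n A x \<le> score n A g)) \<or> l \<le> cnt n A W' x"
  proof -
    fix x assume x: "x \<in> C - W'" and xs: "l * n \<le> score n A x * k"
    then have xW: "x \<in> C - W" using W'_def by auto
    from InvD(8)[OF I xW xs] have "(elig n A C k W l x \<and> (\<forall>g\<in>W. score n A x \<le> score n A g)) \<or> l \<le> cnt n A W x" .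
    then show "(elig n A C k W' l x \<and> (\<forall>g\<in>W'. score n A x \<le> score n A g)) \<or> l \<le> cnt n A W' x"
    proof
      assume "l \<le> cnt n A W x"
      moreover have "cnt n A W x \<le> cnt n A W' x" by (rule cnt_mono) (use finW W'_def in auto)
      ultimately show ?thesis by simp
    next
      assume h: "elig n A C k W l x \<and> (\<forall>g\<in>W. score n A x \<le> score n A g)"
      then have all: "\<forall>g\<in>W'. score n A x \<le> score n A g" using mx W'_def by auto
      show ?thesis
      proof (cases "elig n A C k W' l x")
        case True then show ?thesis using all by auto
      next
        case False
        obtain i where i: "i \<in> {1..n}" "x \<in> A i" "l \<le> card (A i \<inter> W')"
          using noelig_witness[OF False] x xs by auto
        have "l \<le> card W'" using witness_card[of W' l A i, OF finW(2) i(3)] .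
        then show ?thesis using cnt_all[OF all] by simp
      qed
    qed
  qed
  have ex: "\<exists>load::nat\<Rightarrow>real. (\<forall>i\<in>{1..n}. 0 \<le> load i \<and> real n * real l * load i \<le> real k * real (card (A i \<inter> W'))
        \<and> real n * load i \<le> real k) \<and> sum load {1..n} = real (card W')"
    using load'_ok sum' by blast
  show ?thesis unfolding W'_def[symmetric]
    by (rule InvI[OF W'C l1 ex ejr' sc f' g'])
qed


lemma Inv_dec:
  assumes inst: "abc_instance n A C k" and I: "Inv n A C k W l"
    and ne: "\<forall>c. \<not> elig n A C k W l c" and l2: "2 \<le> l"
  shows "Inv n A C k W (l - 1)"
proof -
  have finC: "finite C" and n1: "n \<ge> 1" and k1: "k \<ge> 1"
    using inst unfolding abc_instance_def by auto
  have WC: "W \<subseteq> C" using InvD[OF I] by auto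
  have finW: "finite W" using WC finC by (auto intro: finite_subset)
  have lk: "l \<le> k" using InvD[OF I] by auto
  from InvD(4)[OF I] obtain load where load: "\<forall>i\<in>{1..n}. 0 \<le> load i \<and> real n * real l * load i \<le> real k * real (card (A i \<inter> W))
        \<and> real n * load i \<le> real k" "sum load {1..n} = real (card W)"
    by blast
  have ex: "\<exists>load::nat\<Rightarrow>real. (\<forall>i\<in>{1..n}. 0 \<le> load i \<and> real n * real (l-1) * load i \<le> real k * real (card (A i \<inter> W))
        \<and> real n * load i \<le> real k) \<and> sum load {1..n} = real (card W)"
  proof (intro exI[of _ load] conjI ballI)
    fix i assume i: "i \<in> {1..n}"
    have "real n * real (l-1) * load i \<le> real n * real l * load i"
      using load(1) i by (intro mult_right_mono mult_left_mono) auto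
    moreover have "real n * real l * load i \<le> real k * real (card (A i \<inter> W))"
      using load(1) i by blast
    ultimately show "real n * real (l-1) * load i \<le> real k * real (card (A i \<inter> W))"
      by linarith
  qed (use load in auto)
  have ejr: "\<And>l'. l - 1 < l' \<Longrightarrow> l' \<le> k \<Longrightarrow> ejr_level n A k W l'"
  proof -
    fix l' assume "l - 1 < l'" "l' \<le> k"
    then consider "l' = l" | "l < l'" by linarith
    then show "ejr_level n A k W l'"
    proof cases
      case 1 then show ?thesis using noelig_ejr[OF inst _ ne] l2 by simp
    next
      case 2 then show ?thesis using InvD(5)[OF I] \<open>l' \<le> k\<close> by blast
    qed
  qed
  have sc: "\<And>g. g\<in>W \<Longrightarrow> (l-1) * n \<le> score n A g * k"
  proof -
    fix g assume "g \<in> W"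
    then have "l * n \<le> score n A g * k" using InvD(6)[OF I] by blast
    moreover have "(l-1) * n \<le> l * n" by simp
    ultimately show "(l-1) * n \<le> score n A g * k" by linarith
  qed
  have f: "\<And>x l'. x\<in>C-W \<Longrightarrow> l - 1 < l' \<Longrightarrow> l' * n \<le> score n A x * k \<Longrightarrow> l' \<le> cnt n A W x"
  proof -
    fix x l' assume x: "x \<in> C - W" and ll: "l - 1 < l'" and xs: "l' * n \<le> score n A x * k"
    then consider "l' = l" | "l < l'" by linarith
    then show "l' \<le> cnt n A W x"
    proof cases
      case 1
      then show ?thesis using InvD(8)[OF I x] xs ne by auto
    next
      case 2 then show ?thesis using InvD(7)[OF I x] xs by blast
    qed
  qed
  have g: "\<And>x. x\<in>C-W \<Longrightarrow> (l-1) * n \<le> score n A x * k \<Longrightarrow>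
      (elig n A C k W (l-1) x \<and> (\<forall>g\<in>W. score n A x \<le> score n A g)) \<or> l - 1 \<le> cnt n A W x"
  proof -
    fix x assume x: "x \<in> C - W" and xs: "(l-1) * n \<le> score n A x * k"
    show "(elig n A C k W (l-1) x \<and> (\<forall>g\<in>W. score n A x \<le> score n A g)) \<or> l - 1 \<le> cnt n A W x"
    proof (cases "l * n \<le> score n A x * k")
      case True
      then have "l \<le> cnt n A W x" using f[OF x, of l] l2 by simp
      then have "l - 1 \<le> cnt n A W x" by linarith
      then show ?thesis by blast
    next
      case False
      have all: "\<forall>g\<in>W. score n A x \<le> score n A g"
      proof
        fix g assume "g \<in> W"
        then have "l * n \<le> score n A g * k" using InvD(6)[OF I] by blast
        then have "score n A x * k < score n A g * k" using False by linarith
        then show "score n A x \<le> score n A g" by simp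
      qed
      show ?thesis
      proof (cases "elig n A C k W (l-1) x")
        case True then show ?thesis using all by simp
      next
        case False
        obtain i where i: "i \<in> {1..n}" "x \<in> A i" "l - 1 \<le> card (A i \<inter> W)"
          using noelig_witness[OF False] x xs by auto
        have "l - 1 \<le> card W" using witness_card[of W "l-1" A i, OF finW i(3)] .
        then show ?thesis using cnt_all[OF all] by simp
      qed
    qed
  qed
  show ?thesis
    by (rule InvI[OF WC _ _ ex ejr sc f g]) (use l2 lk in auto)
qed

lemma Inv_init:
  assumes inst: "abc_instance n A C k"
  shows "Inv n A C k {} k"
proof -
  have n1: "n \<ge> 1" and k1: "k \<ge> 1" using inst unfolding abc_instance_def by auto
  have ex: "\<exists>load::nat\<Rightarrow>real. (\<forall>i\<in>{1..n}. 0 \<le> load i \<and> real n * real k * load i \<le> real k * real (card (A i \<inter> {}))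
        \<and> real n * load i \<le> real k) \<and> sum load {1..n} = real (card ({}::'c set))"
    by (intro exI[of _ "\<lambda>_. 0"]) auto
  have f: "\<And>x l'. x\<in>C-{} \<Longrightarrow> k < l' \<Longrightarrow> l' * n \<le> score n A x * k \<Longrightarrow> l' \<le> cnt n A {} x"
  proof -
    fix x l' assume "k < l'" "l' * n \<le> score n A x * k"
    moreover have "score n A x * k \<le> n * k" using score_le[of n A x] by (rule mult_le_mono1)
    ultimately have "l' * n \<le> n * k" by linarith
    then have "l' \<le> k" using n1 by (simp add: mult.commute)
    then show "l' \<le> cnt n A {} x" using \<open>k < l'\<close> by simp
  qed
  have g: "\<And>x. x\<in>C-{} \<Longrightarrow> k * n \<le> score n A x * k \<Longrightarrow>
      (elig n A C k {} k x \<and> (\<forall>g\<in>{}. score n A x \<le> score n A g)) \<or> k \<le> cnt n A {} x"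
  proof -
    fix x assume x: "x \<in> C - {}" and xs: "k * n \<le> score n A x * k"
    have "grp n A {} k x = {i\<in>{1..n}. x \<in> A i}" unfolding grp_def using k1 by auto
    then have "card (grp n A {} k x) = score n A x" unfolding score_def by simp
    then have "elig n A C k {} k x" unfolding elig_def using x xs by simp
    then show "(elig n A C k {} k x \<and> (\<forall>g\<in>{}. score n A x \<le> score n A g)) \<or> k \<le> cnt n A {} x" by simp
  qed
  show ?thesis
    by (rule InvI[OF _ _ _ ex _ _ f g]) (use k1 in auto)
qed

lemma Inv_final:
  assumes inst: "abc_instance n A C k" and I: "Inv n A C k W 1"
    and ne: "\<forall>c. \<not> elig n A C k W 1 c"
  shows "W \<subseteq> C \<and> EJR_plus n A k W \<and> real (card W) * real n \<le> real k * real (cov n A W)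
    \<and> (\<forall>g\<in>W. n \<le> score n A g * k)
    \<and> (\<forall>x\<in>C-W. \<forall>l'. l' * n \<le> score n A x * k \<longrightarrow> l' \<le> cnt n A W x)"
proof -
  have finC: "finite C" and n1: "n \<ge> 1" and k1: "k \<ge> 1"
    using inst unfolding abc_instance_def by auto
  have WC: "W \<subseteq> C" using InvD[OF I] by auto
  have ejr: "EJR_plus n A k W" unfolding EJR_plus_levels
  proof
    fix l assume l: "l \<in> {1..k}"
    show "ejr_level n A k W l"
    proof (cases "l = 1")
      case True then show ?thesis using noelig_ejr[OF inst _ ne] by simp
    next
      case False then show ?thesis using InvD(5)[OF I] l by auto
    qed
  qed
  from InvD(4)[OF I] obtain load where load: "\<forall>i\<in>{1..n}. 0 \<le> load i \<and> real n * real 1 * load i \<le> real k * real (card (A i \<inter> W))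
        \<and> real n * load i \<le> real k" "sum load {1..n} = real (card W)"
    by blast
  have bound: "real n * load i \<le> (if A i \<inter> W \<noteq> {} then real k else 0)" if i: "i \<in> {1..n}" for i
  proof -
    have h: "real n * real 1 * load i \<le> real k * real (card (A i \<inter> W))" "real n * load i \<le> real k"
      using load(1) i by blast+
    show ?thesis
    proof (cases "A i \<inter> W = {}")
      case True then show ?thesis using h(1) by simp
    next
      case False then show ?thesis using h(2) by simp
    qed
  qed
  have "(\<Sum>i\<in>{1..n}. real n * load i) = real n * sum load {1..n}" by (rule sum_distrib_left[symmetric])
  then have "real n * real (card W) = (\<Sum>i\<in>{1..n}. real n * load i)" using load(2) by simp
  also have "\<dots> \<le> (\<Sum>i\<in>{1..n}. (if A i \<inter> W \<noteq> {} then real k else 0))"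
    using bound by (intro sum_mono) auto
  also have "\<dots> = real k * real (cov n A W)"
  proof -
    have "{1..n} \<inter> {i. A i \<inter> W \<noteq> {}} = {i\<in>{1..n}. A i \<inter> W \<noteq> {}}" by auto
    then show ?thesis unfolding cov_def by (simp add: sum.If_cases)
  qed
  finally have cv: "real (card W) * real n \<le> real k * real (cov n A W)" by (simp add: mult.commute)
  have sc: "\<forall>g\<in>W. n \<le> score n A g * k" using InvD(6)[OF I] by simp
  have f: "\<forall>x\<in>C-W. \<forall>l'. l' * n \<le> score n A x * k \<longrightarrow> l' \<le> cnt n A W x"
  proof (intro ballI allI impI)
    fix x l' assume x: "x \<in> C - W" and xs: "l' * n \<le> score n A x * k"
    consider "l' = 0" | "l' = 1" | "1 < l'" by linarith
    then show "l' \<le> cnt n A W x"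
    proof cases
      case 2 then show ?thesis using InvD(8)[OF I x] xs ne by auto
    next
      case 3 then show ?thesis using InvD(7)[OF I x] xs by blast
    qed simp
  qed
  show ?thesis using WC ejr cv sc f by blast
qed

lemma gjcr_exists:
  assumes inst: "abc_instance n A C k"
  shows "\<exists>G. G \<subseteq> C \<and> EJR_plus n A k G \<and> real (card G) * real n \<le> real k * real (cov n A G)
    \<and> (\<forall>g\<in>G. n \<le> score n A g * k)
    \<and> (\<forall>x\<in>C-G. \<forall>l'. l' * n \<le> score n A x * k \<longrightarrow> l' \<le> cnt n A G x)"
proof -
  have finC: "finite C" using inst unfolding abc_instance_def by auto
  define P where "P = (\<lambda>G. G \<subseteq> C \<and> EJR_plus n A k G \<and> real (card G) * real n \<le> real k * real (cov n A G)
    \<and> (\<forall>g\<in>G. n \<le> score n A g * k)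
    \<and> (\<forall>x\<in>C-G. \<forall>l'. l' * n \<le> score n A x * k \<longrightarrow> l' \<le> cnt n A G x))"
  have main: "\<And>W l. m = l * (card C + 1) + card (C - W) \<Longrightarrow> Inv n A C k W l \<Longrightarrow> \<exists>G. P G" for m
  proof (induction m rule: less_induct)
    case (less m)
    fix W l assume m: "m = l * (card C + 1) + card (C - W)" and I: "Inv n A C k W l"
    have WC: "W \<subseteq> C" and l1: "1 \<le> l" using InvD[OF I] by auto
    show "\<exists>G. P G"
    proof (cases "\<exists>c. elig n A C k W l c")
      case True
      define E where "E = {c. elig n A C k W l c}"
      have EC: "E \<subseteq> C" unfolding E_def elig_def by auto
      have finE: "finite E" using EC finC by (auto intro: finite_subset)
      have neE: "E \<noteq> {}" using True E_def by auto
      have "Max (score n A ` E) \<in> score n A ` E" using finE neE by (intro Max_in) auto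
      then obtain c where c: "c \<in> E" "score n A c = Max (score n A ` E)" by auto
      have mx: "\<forall>c'. elig n A C k W l c' \<longrightarrow> score n A c' \<le> score n A c"
        using c finE E_def by auto
      have el: "elig n A C k W l c" using c E_def by auto
      have I': "Inv n A C k (insert c W) l" by (rule Inv_pick[OF inst I el mx])
      have cCW: "c \<in> C - W" using el unfolding elig_def by auto
      have "C - insert c W = (C - W) - {c}" by auto
      moreover have "card ((C - W) - {c}) < card (C - W)"
        using cCW finC by (intro card_Diff1_less) auto
      ultimately have "card (C - insert c W) < card (C - W)" by simp
      then have lt: "l * (card C + 1) + card (C - insert c W) < m" using m by simp
      show ?thesis by (rule less.IH[OF lt refl I'])
    next
      case False
      show ?thesis
      proof (cases "l = 1")
        case True
        have ne: "\<forall>c. \<not> elig n A C k W 1 c" using False True by simp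
        have "P W" unfolding P_def using Inv_final[OF inst I[unfolded True] ne] .
        then show ?thesis by blast
      next
        case l2: False
        have I': "Inv n A C k W (l - 1)" using Inv_dec[OF inst I] False l1 l2 by simp
        have "card (C - W) \<le> card C" using finC by (intro card_mono) auto
        then have "(l - 1) * (card C + 1) + card (C - W) < l * (card C + 1)"
          using l1 l2 by (cases l) auto
        then have lt: "(l - 1) * (card C + 1) + card (C - W) < m" using m by simp
        show ?thesis by (rule less.IH[OF lt refl I'])
      qed
    qed
  qed
  have "\<exists>G. P G" using main[OF refl Inv_init[OF inst]] .
  then show ?thesis unfolding P_def .
qed

lemma sw_eq:
  assumes "finite W"
  shows "sw n A W = (\<Sum>w\<in>W. score n A w)"
proof -
  have "sw n A W = (\<Sum>i\<in>{1..n}. \<Sum>w\<in>W. if w \<in> A i then 1 else (0::nat))"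
    unfolding sw_def
  proof (rule sum.cong[OF refl])
    fix i
    have "(\<Sum>w\<in>W. if w \<in> A i then 1 else (0::nat)) = card (W \<inter> {w. w \<in> A i})"
      using assms by (simp add: sum.If_cases)
    also have "W \<inter> {w. w \<in> A i} = A i \<inter> W" by auto
    finally show "card (A i \<inter> W) = (\<Sum>w\<in>W. if w \<in> A i then 1 else 0)" by simp
  qed
  also have "\<dots> = (\<Sum>w\<in>W. \<Sum>i\<in>{1..n}. if w \<in> A i then 1 else (0::nat))" by (rule sum.swap)
  also have "\<dots> = (\<Sum>w\<in>W. score n A w)"
  proof (rule sum.cong[OF refl])
    fix w
    have "(\<Sum>i\<in>{1..n}. if w \<in> A i then 1 else (0::nat)) = card ({1..n} \<inter> {i. w \<in> A i})"
      by (simp add: sum.If_cases)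
    also have "{1..n} \<inter> {i. w \<in> A i} = {i\<in>{1..n}. w \<in> A i}" by auto
    finally show "(\<Sum>i\<in>{1..n}. if w \<in> A i then 1 else (0::nat)) = score n A w"
      unfolding score_def by simp
  qed
  finally show ?thesis .
qed

lemma max_attained:
  fixes f :: "'c set \<Rightarrow> nat"
  assumes "finite C" "k \<le> card C"
  shows "\<exists>T. T \<subseteq> C \<and> card T = k \<and> Max {f W' | W'. W' \<subseteq> C \<and> card W' = k} = f T"
proof -
  have eq: "{f W' | W'. W' \<subseteq> C \<and> card W' = k} = f ` {W'. W' \<subseteq> C \<and> card W' = k}" by auto
  have fin: "finite {W'. W' \<subseteq> C \<and> card W' = k}"
  proof (rule finite_subset)
    show "{W'. W' \<subseteq> C \<and> card W' = k} \<subseteq> Pow C" by auto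
    show "finite (Pow C)" using assms(1) by simp
  qed
  obtain T0 where "T0 \<subseteq> C" "card T0 = k" using obtain_subset_with_card_n[OF assms(2)] by blast
  then have ne: "{W'. W' \<subseteq> C \<and> card W' = k} \<noteq> {}" by auto
  have "Max (f ` {W'. W' \<subseteq> C \<and> card W' = k}) \<in> f ` {W'. W' \<subseteq> C \<and> card W' = k}"
    using fin ne by (intro Max_in) auto
  then obtain T where T: "T \<in> {W'. W' \<subseteq> C \<and> card W' = k}" and fT: "Max (f ` {W'. W' \<subseteq> C \<and> card W' = k}) = f T"
    by (rule imageE) simp
  have "Max {f W' | W'. W' \<subseteq> C \<and> card W' = k} = f T" using fT by (simp only: eq)
  then show ?thesis using T by blast
qed

lemma cov_le: "cov n A W \<le> n"
proof -
  have "cov n A W \<le> card {1..n}" unfolding cov_def by (intro card_mono) auto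
  then show ?thesis by simp
qed

theorem theorem6:
  fixes c :: real and n k :: nat and A :: "nat \<Rightarrow> 'c set" and C :: "'c set"
  assumes "c > 2"
    and "abc_instance n A C k"
  shows "\<exists>W. W \<subseteq> C \<and> card W \<le> k \<and> EJR_plus n A k W
           \<and> rep_ratio n A C k W \<ge> 3/4
           \<and> util_ratio n A C k W \<ge>
               min (2 / sqrt (c * real k) - 2 / real k) ((c - 2)^2 / (4 * c^2) - 1 / real k)"
proof -
  note inst = assms(2)
  have c2: "c > 2" using assms(1) .
  have finC: "finite C" and n1: "n \<ge> 1" and AC: "\<forall>i\<in>{1..n}. A i \<subseteq> C" and k1: "1 \<le> k"
    and kC: "k \<le> card C"
    using inst unfolding abc_instance_def by auto
  define K where "K = real k"
  define N where "N = real n"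
  have K1: "K \<ge> 1" and K0: "K > 0" and N0: "N > 0" using k1 n1 K_def N_def by auto
  obtain G where GC: "G \<subseteq> C" and ejrG: "EJR_plus n A k G"
    and cvG: "real (card G) * real n \<le> real k * real (cov n A G)"
    and scG: "\<forall>g\<in>G. n \<le> score n A g * k"
    and cntG: "\<forall>x\<in>C-G. \<forall>l'. l' * n \<le> score n A x * k \<longrightarrow> l' \<le> cnt n A G x"
    using gjcr_exists[OF inst] by blast
  have finG: "finite G" using GC finC by (auto intro: finite_subset)
  define g where "g = card G"
  define V where "V = cov n A G"
  have Vn: "V \<le> n" unfolding V_def by (rule cov_le)
  have gk: "g \<le> k"
  proof -
    have "real g * N \<le> K * real V" using cvG g_def V_def K_def N_def by simp
    also have "\<dots> \<le> K * N" using Vn K0 N_def by (intro mult_left_mono) auto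
    finally have "real g * N \<le> K * N" .
    then have "real g \<le> K" using N0 by simp
    then show ?thesis using K_def by simp
  qed
  define CovG where "CovG = {i\<in>{1..n}. A i \<inter> G \<noteq> {}}"
  define U where "U = {i\<in>{1..n}. A i \<inter> G = {}}"
  have VCov: "V = card CovG" unfolding V_def cov_def CovG_def by simp
  have finU: "finite U" "finite CovG" unfolding U_def CovG_def by auto
  have UCov: "card U + V = n"
  proof -
    have "CovG \<union> U = {1..n}" "CovG \<inter> U = {}" unfolding CovG_def U_def by auto
    then have "card (CovG \<union> U) = card CovG + card U" by (intro card_Un_disjoint) (use finU in auto)
    moreover have "card (CovG \<union> U) = n" using \<open>CovG \<union> U = {1..n}\<close> by simp
    ultimately show ?thesis using VCov by simp
  qed
  obtain Oc where OcC: "Oc \<subseteq> C" and cOc: "card Oc = k" and mcov: "max_cov n A C k = cov n A Oc"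
    using max_attained[OF finC kC, of "cov n A"] unfolding max_cov_def by blast
  have finOc: "finite Oc" using OcC finC by (auto intro: finite_subset)
  define UO where "UO = {i\<in>U. A i \<inter> Oc \<noteq> {}}"
  define \<phi> where "\<phi> = (\<lambda>i. SOME b. b \<in> Oc \<and> b \<in> A i)"
  have phi: "\<phi> i \<in> Oc \<and> \<phi> i \<in> A i \<and> \<phi> i \<notin> G" if i: "i \<in> UO" for i
  proof -
    have "\<exists>b. b \<in> Oc \<and> b \<in> A i" using i unfolding UO_def by auto
    then have "\<phi> i \<in> Oc \<and> \<phi> i \<in> A i" unfolding \<phi>_def by (rule someI_ex)
    moreover have "A i \<inter> G = {}" using i unfolding UO_def U_def by auto
    ultimately show ?thesis by auto
  qed
  define D where "D = (\<lambda>b. {i\<in>UO. \<phi> i = b})"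
  define u where "u = card UO"
  have finUO: "finite UO" unfolding UO_def using finU by auto
  have uU: "u \<le> card U" unfolding u_def UO_def using finU by (intro card_mono) auto
  have finD: "\<And>b. finite (D b)" unfolding D_def using finUO by auto
  have sumD: "(\<Sum>b\<in>Oc-G. card (D b)) = u"
  proof -
    have "UO = (\<Union>b\<in>Oc-G. D b)" unfolding D_def using phi by auto
    moreover have "card (\<Union>b\<in>Oc-G. D b) = (\<Sum>b\<in>Oc-G. card (D b))"
      using finOc finD by (intro card_UN_disjoint) (auto simp: D_def)
    ultimately show ?thesis unfolding u_def by simp
  qed
  have optcov: "cov n A Oc \<le> V + u"
  proof -
    have "{i\<in>{1..n}. A i \<inter> Oc \<noteq> {}} \<subseteq> CovG \<union> UO" unfolding CovG_def UO_def U_def by auto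
    then have "cov n A Oc \<le> card (CovG \<union> UO)" unfolding cov_def using finU finUO by (intro card_mono) auto
    also have "\<dots> \<le> card CovG + card UO" by (rule card_Un_le)
    finally show ?thesis using VCov u_def by simp
  qed
  have ex_r: "3*k*u \<le> g*n + 4*(k-g)*u"
  proof -
    have "3*K*real u \<le> real g*N + 4*(K - real g)*real u"
    proof (rule r_exists_real[OF K0 _ _ _ _ _, of N "real g" "real u" "real V"])
      show "real g * N \<le> K * real V" using cvG g_def V_def K_def N_def by simp
      show "real u + real V \<le> N" using uU UCov N_def by simp
    qed (use N0 in auto)
    then have "real (3*k*u) \<le> real (g*n + 4*(k-g)*u)" using gk K_def N_def by (simp add: of_nat_diff)
    then show ?thesis by (simp only: of_nat_le_iff)
  qed
  define r1 where "r1 = (LEAST r. 3*k*u \<le> g*n + 4*r*u)"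
  have r1ok: "3*k*u \<le> g*n + 4*r1*u" unfolding r1_def by (rule LeastI[of _ "k-g"]) (rule ex_r)
  have r1le: "r1 \<le> k - g" unfolding r1_def by (rule Least_le) (rule ex_r)
  have r1min: "r1 = 0 \<or> (u > 0 \<and> g*n + 4*(r1-1)*u < 3*k*u)"
  proof (cases "r1 = 0")
    case False
    have "\<not> 3*k*u \<le> g*n + 4*(r1-1)*u"
      unfolding r1_def by (rule not_less_Least) (use False r1_def in simp)
    moreover have "u > 0"
    proof (rule ccontr)
      assume "\<not> u > 0"
      then have "u = 0" by simp
      then have "r1 \<le> 0" unfolding r1_def by (intro Least_le) simp
      then show False using False by simp
    qed
    ultimately show ?thesis by simp
  qed simp
  have cOG: "card (Oc - G) \<le> k" using cOc finOc by (metis card_mono Diff_subset)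
  have r1k: "r1 \<le> k" using r1le by simp
  obtain F1 where F1: "F1 \<subseteq> Oc - G" "card F1 \<le> r1"
    "real r1 * (\<Sum>b\<in>Oc-G. real (card (D b))) \<le> real k * (\<Sum>b\<in>F1. real (card (D b)))"
    using good_subset[of "Oc - G" "\<lambda>b. real (card (D b))" k r1] finOc cOG r1k by auto
  define f where "f = (\<Sum>b\<in>F1. card (D b))"
  have F1b: "real r1 * real u \<le> K * real f"
  proof -
    have "(\<Sum>b\<in>Oc-G. real (card (D b))) = real u" using sumD by (simp flip: of_nat_sum)
    moreover have "(\<Sum>b\<in>F1. real (card (D b))) = real f" unfolding f_def by simp
    ultimately show ?thesis using F1(3) K_def by simp
  qed
  have finF1: "finite F1" using F1(1) finOc by (auto intro: finite_subset)
  obtain T where TC: "T \<subseteq> C" and cT: "card T = k" and msw: "max_sw n A C k = sw n A T"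
    using max_attained[OF finC kC, of "sw n A"] unfolding max_sw_def by blast
  have finT: "finite T" using TC finC by (auto intro: finite_subset)
  define r2 where "r2 = k - g - r1"
  define T' where "T' = T - (G \<union> F1)"
  have cT': "card T' \<le> k" unfolding T'_def using cT finT by (metis card_mono Diff_subset)
  have r2k: "r2 \<le> k" unfolding r2_def by simp
  obtain F2 where F2: "F2 \<subseteq> T'" "card F2 \<le> r2"
    "real r2 * (\<Sum>t\<in>T'. real (score n A t)) \<le> real k * (\<Sum>t\<in>F2. real (score n A t))"
    using good_subset[of T' "\<lambda>t. real (score n A t)" k r2] finT cT' r2k T'_def by auto
  have finF2: "finite F2" using F2(1) finT T'_def by (auto intro: finite_subset)
  define W where "W = G \<union> F1 \<union> F2"
  have WC: "W \<subseteq> C" unfolding W_def using GC F1(1) OcC F2(1) T'_def TC by auto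
  have finW: "finite W" unfolding W_def using finG finF1 finF2 by simp
  have cardW: "card W \<le> k"
  proof -
    have "card W \<le> card G + card F1 + card F2" unfolding W_def
      by (metis card_Un_le add_le_mono1 le_trans)
    also have "\<dots> \<le> g + r1 + r2" using F1(2) F2(2) g_def by simp
    also have "\<dots> = k" unfolding r2_def using r1le gk by simp
    finally show ?thesis .
  qed
  have ejrW: "EJR_plus n A k W" by (rule EJR_plus_mono[OF ejrG _ finW]) (auto simp: W_def)
  have covW: "V + f \<le> cov n A W"
  proof -
    have disj: "CovG \<inter> (\<Union>b\<in>F1. D b) = {}" unfolding CovG_def D_def UO_def U_def by auto
    have cU: "card (\<Union>b\<in>F1. D b) = f"
      unfolding f_def using finF1 finD by (intro card_UN_disjoint) (auto simp: D_def)
    have "card (CovG \<union> (\<Union>b\<in>F1. D b)) = V + f"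
      using card_Un_disjoint[OF finU(2) _ disj] finF1 finD cU VCov by simp
    moreover have "CovG \<union> (\<Union>b\<in>F1. D b) \<subseteq> {i\<in>{1..n}. A i \<inter> W \<noteq> {}}"
    proof
      fix i assume "i \<in> CovG \<union> (\<Union>b\<in>F1. D b)"
      then show "i \<in> {i\<in>{1..n}. A i \<inter> W \<noteq> {}}"
      proof
        assume "i \<in> CovG" then show ?thesis unfolding CovG_def W_def by auto
      next
        assume "i \<in> (\<Union>b\<in>F1. D b)"
        then obtain b where b: "b \<in> F1" "i \<in> D b" by auto
        then have "i \<in> UO" "\<phi> i = b" unfolding D_def by auto
        then have "b \<in> A i" "i \<in> {1..n}" using phi unfolding UO_def U_def by auto
        then show ?thesis using b(1) unfolding W_def by auto
      qed
    qed
    then have "card (CovG \<union> (\<Union>b\<in>F1. D b)) \<le> cov n A W" unfolding cov_def by (intro card_mono) auto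
    ultimately show ?thesis by simp
  qed
  have rep: "rep_ratio n A C k W \<ge> 3/4"
  proof -
    have a1: "real g * N \<le> K * real V" using cvG g_def V_def K_def N_def by simp
    have a2: "3*K*real u \<le> real g * N + 4 * real r1 * real u"
    proof -
      have "real (3*k*u) \<le> real (g*n + 4*r1*u)" using r1ok by (simp only: of_nat_le_iff)
      then show ?thesis using K_def N_def by simp
    qed
    have "K * (3 * real u) \<le> K * (real V + 4 * real f)"
      using a1 a2 F1b by (simp add: algebra_simps)
    then have a3: "3 * real u \<le> real V + 4 * real f" using K0 by simp
    have mc: "real (max_cov n A C k) \<le> real V + real u" using mcov optcov by simp
    have cw: "real V + real f \<le> real (cov n A W)" using covW by simp
    show ?thesis
    proof (cases "max_cov n A C k = 0")
      case True then show ?thesis unfolding rep_ratio_def by simp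
    next
      case False
      then have mp: "real (max_cov n A C k) > 0" by simp
      have "3/4 * real (max_cov n A C k) \<le> real (cov n A W)" using a3 mc cw by linarith
      then show ?thesis unfolding rep_ratio_def using False mp by (simp add: field_simps)
    qed
  qed
  define sc where "sc = (\<lambda>t. real (score n A t))"
  have sc0: "\<And>t. sc t \<ge> 0" unfolding sc_def by simp
  define OPT where "OPT = real (max_sw n A C k)"
  define SW where "SW = real (sw n A W)"
  have SWs: "SW = (\<Sum>w\<in>W. sc w)" unfolding SW_def sc_def using sw_eq[OF finW] by simp
  have OPTs: "OPT = (\<Sum>t\<in>T. sc t)" unfolding OPT_def sc_def using msw sw_eq[OF finT] by simp
  have U1: "real r2 * OPT \<le> K * SW"
  proof -
    define P where "P = T \<inter> (G \<union> F1)"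
    have finP: "finite P" unfolding P_def using finT by simp
    have TP: "T - T' = P" unfolding T'_def P_def by auto
    have "OPT = (\<Sum>t\<in>T - T'. sc t) + (\<Sum>t\<in>T'. sc t)"
      unfolding OPTs using finT by (intro sum.subset_diff) (auto simp: T'_def)
    then have o1: "OPT = (\<Sum>t\<in>P. sc t) + (\<Sum>t\<in>T'. sc t)" using TP by simp
    have PF2: "P \<inter> F2 = {}" using F2(1) unfolding P_def T'_def by auto
    have "(\<Sum>t\<in>P \<union> F2. sc t) = (\<Sum>t\<in>P. sc t) + (\<Sum>t\<in>F2. sc t)"
      using finP finF2 PF2 by (intro sum.union_disjoint) auto
    moreover have "(\<Sum>t\<in>P \<union> F2. sc t) \<le> (\<Sum>w\<in>W. sc w)"
      using finW sc0 by (intro sum_mono2) (auto simp: P_def W_def)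
    ultimately have s1: "(\<Sum>t\<in>P. sc t) + (\<Sum>t\<in>F2. sc t) \<le> SW" using SWs by simp
    have s2: "real r2 * (\<Sum>t\<in>T'. sc t) \<le> K * (\<Sum>t\<in>F2. sc t)" using F2(3) K_def sc_def by simp
    have s3: "real r2 * (\<Sum>t\<in>P. sc t) \<le> K * (\<Sum>t\<in>P. sc t)"
      using r2k K_def sc0 by (intro mult_right_mono sum_nonneg) auto
    have "real r2 * OPT = real r2 * (\<Sum>t\<in>P. sc t) + real r2 * (\<Sum>t\<in>T'. sc t)"
      using o1 by (simp add: algebra_simps)
    also have "\<dots> \<le> K * ((\<Sum>t\<in>P. sc t) + (\<Sum>t\<in>F2. sc t))" using s2 s3 by (simp add: algebra_simps)
    also have "\<dots> \<le> K * SW" using s1 K0 by (intro mult_left_mono) auto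
    finally show ?thesis .
  qed
  have f2le1: "(c - 2)^2 / (4 * c^2) - 1 / real k \<le> 1"
  proof -
    have "(c-2)^2 \<le> c^2" using c2 by (simp add: power2_eq_square algebra_simps)
    then have "(c - 2)^2 / (4 * c^2) \<le> c^2 / (4*c^2)" using c2 by (intro divide_right_mono) auto
    also have "\<dots> = 1/4" using c2 by simp
    finally have "(c - 2)^2 / (4 * c^2) \<le> 1/4" .
    moreover have "1 / real k \<ge> 0" by simp
    ultimately show ?thesis by linarith
  qed
  define tgt where "tgt = min (2 / sqrt (c * real k) - 2 / real k) ((c - 2)^2 / (4 * c^2) - 1 / real k)"
  have util: "util_ratio n A C k W \<ge> tgt"
  proof (cases "max_sw n A C k = 0")
    case True
    then have "util_ratio n A C k W = 1" unfolding util_ratio_def by simp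
    then show ?thesis using f2le1 unfolding tgt_def by simp
  next
    case False
    then have OPT0: "OPT > 0" unfolding OPT_def by simp
    have ur: "util_ratio n A C k W = SW / OPT" unfolding util_ratio_def SW_def OPT_def using False by simp
    have a1: "real g * N \<le> K * real V" using cvG g_def V_def K_def N_def by simp
    have a2: "3*K*real u \<le> real g * N + 4 * real r1 * real u"
    proof -
      have "real (3*k*u) \<le> real (g*n + 4*r1*u)" using r1ok by (simp only: of_nat_le_iff)
      then show ?thesis using K_def N_def by simp
    qed
    consider (I) "c*(real g*N + K*real u) \<ge> 2*K*N" | (II) "c*(real g*N + K*real u) < 2*K*N" by linarith
    then show ?thesis
    proof cases
      case II
      have r2r: "real r2 = K - real g - real r1" unfolding r2_def K_def using r1le gk by (simp add: of_nat_diff)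
      have uv: "K * real u \<le> K*N - real g * N"
      proof -
        have "real u + real V \<le> N" using uU UCov N_def by simp
        then have "K * (real u + real V) \<le> K * N" using K0 by (intro mult_left_mono) auto
        then show ?thesis using a1 by (simp add: algebra_simps)
      qed
      have r1c: "real r1 = 0 \<or> (real u > 0 \<and> real g * N + 4*(real r1 - 1)*real u < 3*K*real u)"
        using r1min
      proof
        assume "r1 = 0" then show ?thesis by simp
      next
        assume h: "u > 0 \<and> g*n + 4*(r1-1)*u < 3*k*u"
        then have "real (g*n + 4*(r1-1)*u) < real (3*k*u)" by (simp only: of_nat_less_iff)
        moreover have "r1 \<ge> 1" using h r1ok by (cases r1) auto
        ultimately have "real g * N + 4*(real r1 - 1)*real u < 3*K*real u"
          using K_def N_def by (simp add: of_nat_diff)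
        then show ?thesis using h by simp
      qed
      have "(K - real g - real r1)/K \<ge> (c-2)^2/(4*c^2) - 1/K"
        by (rule caseII_bound[OF K1 N0 c2 _ _ II uv r1c]) auto
      moreover have "real r2 / K \<le> SW / OPT"
      proof -
        have "real r2 * OPT \<le> SW * K" using U1 by (simp add: mult.commute)
        then show ?thesis using K0 OPT0 by (simp add: field_simps)
      qed
      ultimately have "SW / OPT \<ge> (c-2)^2/(4*c^2) - 1/K" using r2r by simp
      then show ?thesis using ur unfolding tgt_def K_def by simp
    next
      case I
      show ?thesis
      proof (cases "\<forall>y\<in>C-W. score n A y = 0")
        case True
        have "OPT = (\<Sum>t\<in>T - (T - W). sc t) + (\<Sum>t\<in>T - W. sc t)"
          unfolding OPTs using finT by (intro sum.subset_diff) auto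
        moreover have "(\<Sum>t\<in>T - W. sc t) = 0" using True TC unfolding sc_def by (intro sum.neutral) auto
        moreover have "(\<Sum>t\<in>T - (T - W). sc t) \<le> SW"
          unfolding SWs using finW sc0 by (intro sum_mono2) auto
        ultimately have "OPT \<le> SW" by simp
        then have "util_ratio n A C k W \<ge> 1" using ur OPT0 by simp
        then show ?thesis using f2le1 unfolding tgt_def by simp
      next
        case False
        then obtain y where y: "y \<in> C - W" "score n A y > 0" by auto
        have finR: "finite (C - W)" using finC by simp
        define s where "s = Max (score n A ` (C - W))"
        have "s \<in> score n A ` (C - W)" unfolding s_def using finR y by (intro Max_in) auto
        then obtain x where x: "x \<in> C - W" "score n A x = s" by auto
        have smax: "\<And>z. z \<in> C - W \<Longrightarrow> score n A z \<le> s" unfolding s_def using finR by simp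
        have s0: "s > 0" using smax[OF y(1)] y(2) by simp
        define S where "S = real s"
        have S0: "S > 0" using s0 S_def by simp
        have OPTb: "OPT \<le> SW + K*S"
        proof -
          have "OPT = (\<Sum>t\<in>T - (T - W). sc t) + (\<Sum>t\<in>T - W. sc t)"
            unfolding OPTs using finT by (intro sum.subset_diff) auto
          moreover have "(\<Sum>t\<in>T - (T - W). sc t) \<le> SW"
            unfolding SWs using finW sc0 by (intro sum_mono2) auto
          moreover have "(\<Sum>t\<in>T - W. sc t) \<le> (\<Sum>t\<in>T - W. S)"
            using smax TC unfolding sc_def S_def by (intro sum_mono) auto
          moreover have "(\<Sum>t\<in>T - W. S) \<le> K * S"
          proof -
            have "card (T - W) \<le> k" using cT finT by (metis card_mono Diff_subset)
            then show ?thesis using S0 K_def by simp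
          qed
          ultimately show ?thesis by linarith
        qed
        define Lb where "Lb = (\<Sum>h\<in>G. sc h) + real f"
        have GF1: "G \<inter> F1 = {}" using F1(1) by auto
        have Dsc: "\<And>b. real (card (D b)) \<le> sc b"
        proof -
          fix b
          have "D b \<subseteq> {i\<in>{1..n}. b \<in> A i}"
          proof
            fix i assume "i \<in> D b"
            then have i: "i \<in> UO" "\<phi> i = b" by (auto simp: D_def)
            then have "b \<in> A i" using phi[OF i(1)] by simp
            moreover have "i \<in> {1..n}" using i(1) by (auto simp: UO_def U_def)
            ultimately show "i \<in> {i\<in>{1..n}. b \<in> A i}" by simp
          qed
          then have "card (D b) \<le> score n A b" unfolding score_def by (intro card_mono) auto
          then show "real (card (D b)) \<le> sc b" unfolding sc_def by simp
        qed
        have LbSW: "Lb \<le> SW"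
        proof -
          have "real f = (\<Sum>b\<in>F1. real (card (D b)))" unfolding f_def by simp
          also have "\<dots> \<le> (\<Sum>b\<in>F1. sc b)" using Dsc by (intro sum_mono) auto
          finally have "Lb \<le> (\<Sum>h\<in>G. sc h) + (\<Sum>b\<in>F1. sc b)" unfolding Lb_def by simp
          also have "\<dots> = (\<Sum>h\<in>G \<union> F1. sc h)" using finG finF1 GF1 by (simp add: sum.union_disjoint)
          also have "\<dots> \<le> SW" unfolding SWs using finW sc0 by (intro sum_mono2) (auto simp: W_def)
          finally show ?thesis .
        qed
        have Lb0: "Lb \<ge> 0" unfolding Lb_def using sc0 by (simp add: sum_nonneg)
        have xG: "x \<in> C - G" using x unfolding W_def by auto
        define cn where "cn = cnt n A G x"
        have cnb: "(real cn + 1) * N > K * S"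
        proof -
          have "\<not> (cn + 1) * n \<le> score n A x * k"
          proof
            assume "(cn + 1) * n \<le> score n A x * k"
            then have "cn + 1 \<le> cnt n A G x" using cntG xG by blast
            then show False using cn_def by simp
          qed
          then have "score n A x * k < (cn + 1) * n" by simp
          then have "real (score n A x * k) < real ((cn + 1) * n)" by (simp only: of_nat_less_iff)
          then show ?thesis using x(2) S_def K_def N_def by (simp add: algebra_simps)
        qed
        define M where "M = max 0 (K*S - N)"
        have KG: "K * (\<Sum>h\<in>G. sc h) \<ge> real g * N + real cn * M"
        proof -
          define B where "B = {h\<in>G. score n A x \<le> score n A h}"
          have cB: "card B = cn" unfolding B_def cn_def cnt_def by simp
          have finB: "finite B" unfolding B_def using finG by simp
          have BG: "B \<subseteq> G" unfolding B_def by auto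
          have cGB: "card B + card (G - B) = g" unfolding g_def using finG BG
            by (metis card_Diff_subset card_mono add_diff_inverse_nat not_less finite_subset)
          have h1: "\<And>h. h \<in> B \<Longrightarrow> K * sc h \<ge> N + M"
          proof -
            fix h assume h: "h \<in> B"
            then have "score n A x \<le> score n A h" "n \<le> score n A h * k" using scG unfolding B_def by auto
            then have "S \<le> sc h" "N \<le> sc h * K" unfolding S_def sc_def N_def K_def using x(2)
              by (auto simp flip: of_nat_mult)
            then have "K * S \<le> K * sc h" using K0 by simp
            then show "K * sc h \<ge> N + M" unfolding M_def using \<open>N \<le> sc h * K\<close> by (simp add: mult.commute)
          qed
          have h2: "\<And>h. h \<in> G - B \<Longrightarrow> K * sc h \<ge> N"
          proof -
            fix h assume "h \<in> G - B"
            then have "n \<le> score n A h * k" using scG by auto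
            then have "N \<le> sc h * K" unfolding sc_def N_def K_def by (simp flip: of_nat_mult)
            then show "K * sc h \<ge> N" by (simp add: mult.commute)
          qed
          have "(\<Sum>h\<in>G. sc h) = (\<Sum>h\<in>B. sc h) + (\<Sum>h\<in>G - B. sc h)"
            using finG BG by (metis sum.subset_diff add.commute)
          then have "K * (\<Sum>h\<in>G. sc h) = (\<Sum>h\<in>B. K * sc h) + (\<Sum>h\<in>G - B. K * sc h)"
            by (simp add: sum_distrib_left algebra_simps)
          also have "\<dots> \<ge> (\<Sum>h\<in>B. N + M) + (\<Sum>h\<in>G - B. N)"
            using h1 h2 by (intro add_mono sum_mono) auto
          finally have "K * (\<Sum>h\<in>G. sc h) \<ge> real (card B) * (N + M) + real (card (G - B)) * N" by simp
          moreover have "real (card B) * (N + M) + real (card (G - B)) * N = real g * N + real cn * M"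
          proof -
            have "real (card B) + real (card (G - B)) = real g" using cGB by (simp flip: of_nat_add)
            then show ?thesis using cB by (simp add: algebra_simps) (metis distrib_right mult.commute)
          qed
          ultimately show ?thesis by simp
        qed
        have KLb: "K * Lb \<ge> (real g * N + real r1 * real u) + real cn * M"
          using KG F1b unfolding Lb_def by (simp add: algebra_simps)
        have Qb: "real g * N + real r1 * real u \<ge> 3*K*N/(2*c)"
        proof -
          have e: "4*(real g * N + real r1 * real u) - 3*(real g * N + K*real u) = real g * N + (4 * real r1 * real u - 3 * K * real u)"
            by (simp add: algebra_simps)
          have "real g * N \<ge> 0" using N0 by simp
          then have "4*(real g * N + real r1 * real u) \<ge> 3*(real g * N + K*real u)" using a2 e by linarith
          moreover have "real g * N + K*real u \<ge> 2*K*N/c" using I c2 by (simp add: field_simps)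
          ultimately have "4*(real g * N + real r1 * real u) \<ge> 3*(2*K*N/c)"
            by (meson order_trans mult_left_mono zero_le_numeral)
          moreover have "3*K*N/(2*c) = (3*(2*K*N/c))/4" by (simp add: field_simps)
          moreover have gen: "\<And>X Y Z::real. 3*X \<le> 4*Y \<Longrightarrow> Z = 3*X/4 \<Longrightarrow> Z \<le> Y" by linarith
          ultimately show ?thesis by blast
        qed
        have "Lb/(Lb + K*S) \<ge> 2/sqrt(c*K) - 2/K"
          by (rule caseI_bound[OF K1 N0 S0 c2 _ cnb _ Qb]) (use KLb M_def in auto)
        moreover have "Lb/(Lb + K*S) \<le> SW/OPT"
          by (rule ratio_lb[OF Lb0 LbSW OPT0 OPTb]) (use K0 S0 in simp)
        ultimately have "SW/OPT \<ge> 2/sqrt(c*K) - 2/K" by linarith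
        then show ?thesis using ur unfolding tgt_def K_def by simp
      qed
    qed
  qed
  show ?thesis
    using WC cardW ejrW rep util unfolding tgt_def by blast
qed

end
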